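(* Let $n\ge 2$, $t\ge 2$, let $V$ be a $2n$-dimensional $\mathbb{F}_{q^t}$-vector space with $V=U_1\oplus U_2$, $\dim U_1=\dim U_2=n$, and put $T_1=PG(U_1,\mathbb{F}_{q^t})$, $T_2=PG(U_2,\mathbb{F}_{q^t})$ (two disjoint $(n-1)$-dimensional subspaces of $\Lambda=PG(V,\mathbb{F}_{q^t})=PG(2n-1,q^t)$). Let $f:U_1\to U_2$ be an invertible semilinear map with companion automorphism $\sigma\in\mathrm{Aut}(\mathbb{F}_{q^t})$ such that $\mathrm{Fix}(\sigma)=\mathbb{F}_q$, and let $\Phi_f:T_1\to T_2$ be the induced collineation, $\langle\mathbf u\rangle_{q^t}\mapsto\langle f(\mathbf u)\rangle_{q^t}$. Then for every $\rho\in\mathbb{F}_{q^t}^*$ the set $$L_{\rho,f}=\{\langle \mathbf u+\rho f(\mathbf u)\rangle_{q^t}:\mathbf u\in U_1\setminus\{\mathbf 0\}\},$$ which is the $\mathbb{F}_q$-linear set defined by the $\mathbb{F}_q$-subspace $W_{\rho,f}=\{\mathbf u+\rho f(\mathbf u):\mathbf u\in U_1\}$ (of $\mathbb{F}_q$-dimension $tn$), is an $\mathbb{F}_q$-linear set of $\Lambda$ of pseudoregulus type, whose associated pseudoregulus is $\{\langle P,P^{\Phi_f}\rangle_{q^t}:P\in T_1\}$ and whose transversal spaces are $T_1$ and $T_2$.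
   Context: A map $f:U_1\to U_2$ between $\mathbb{F}_{q^t}$-spaces is semilinear with companion automorphism $\sigma$ if it is additive and $f(\lambda\mathbf u)=\lambda^\sigma f(\mathbf u)$ for all $\lambda\in\mathbb{F}_{q^t}$. For an $\mathbb{F}_q$-subspace $U$ of $V$, $L_U=\{\langle \mathbf u\rangle_{q^t}:\mathbf u\in U\setminus\{\mathbf 0\}\}$ is the $\mathbb{F}_q$-linear set defined by $U$, of rank $\dim_{\mathbb{F}_q}U$; the weight of a subspace $PG(W,\mathbb{F}_{q^t})$ in $L_U$ is $\dim_{\mathbb{F}_q}(W\cap U)$; $L_U$ is scattered if every point has weight 1. Definition (pseudoregulus type): for integers $t,n\ge 2$, a scattered $\mathbb{F}_q$-linear set $L=L_U$ of $\Lambda=PG(2n-1,q^t)$ of rank $tn$ is of pseudoregulus type if (i) there exist $m=(q^{nt}-1)/(q^t-1)$ pairwise disjoint lines $s_1,\dots,s_m$ of $\Lambda$ each having weight $t$ in $L$, and (ii) there exist exactly two $(n-1)$-dimensional subspaces $T_1,T_2$ of $\Lambda$ disjoint from $L$ such that $T_j\cap s_i\neq\emptyset$ for all $i,j$. The set $\{s_1,\dots,s_m\}$ is called the pseudoregulus associated with $L$, and $T_1,T_2$ its transversal spaces. *)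

theory Defs
  imports Main "HOL.Vector_Spaces"
begin

(* V is the whole type 'v, a vector space over the finite field 'k via the scalar
   multiplication sc.  Fq is a subfield of 'k given as a set of scalars. *)

definition fq_span :: "('k::field \<Rightarrow> 'v::ab_group_add \<Rightarrow> 'v) \<Rightarrow> 'k set \<Rightarrow> 'v set \<Rightarrow> 'v set" where
  "fq_span sc Fq S = {x. \<exists>T c. finite T \<and> T \<subseteq> S \<and> (\<forall>v\<in>T. c v \<in> Fq) \<and> x = (\<Sum>v\<in>T. sc (c v) v)}"

definition fq_indep :: "('k::field \<Rightarrow> 'v::ab_group_add \<Rightarrow> 'v) \<Rightarrow> 'k set \<Rightarrow> 'v set \<Rightarrow> bool" where
  "fq_indep sc Fq B \<longleftrightarrow> (\<forall>T c. finite T \<and> T \<subseteq> B \<and> (\<forall>v\<in>T. c v \<in> Fq) \<and> (\<Sum>v\<in>T. sc (c v) v) = 0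
      \<longrightarrow> (\<forall>v\<in>T. c v = 0))"

definition fq_subspace :: "('k::field \<Rightarrow> 'v::ab_group_add \<Rightarrow> 'v) \<Rightarrow> 'k set \<Rightarrow> 'v set \<Rightarrow> bool" where
  "fq_subspace sc Fq X \<longleftrightarrow> 0 \<in> X \<and> (\<forall>x\<in>X. \<forall>y\<in>X. x + y \<in> X) \<and> (\<forall>c\<in>Fq. \<forall>x\<in>X. sc c x \<in> X)"

(* dimension over Fq = cardinality of a finite Fq-basis (0 if none exists) *)
definition fq_dim :: "('k::field \<Rightarrow> 'v::ab_group_add \<Rightarrow> 'v) \<Rightarrow> 'k set \<Rightarrow> 'v set \<Rightarrow> nat" where
  "fq_dim sc Fq X = (if \<exists>B. finite B \<and> B \<subseteq> X \<and> fq_indep sc Fq B \<and> fq_span sc Fq B = X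
      then card (SOME B. finite B \<and> B \<subseteq> X \<and> fq_indep sc Fq B \<and> fq_span sc Fq B = X) else 0)"

definition pt :: "('k::field \<Rightarrow> 'v::ab_group_add \<Rightarrow> 'v) \<Rightarrow> 'v \<Rightarrow> 'v set" where
  "pt sc v = range (\<lambda>c. sc c v)"

definition linear_set :: "('k::field \<Rightarrow> 'v::ab_group_add \<Rightarrow> 'v) \<Rightarrow> 'v set \<Rightarrow> 'v set set" where
  "linear_set sc W = {pt sc w | w. w \<in> W \<and> w \<noteq> 0}"

definition weight :: "('k::field \<Rightarrow> 'v::ab_group_add \<Rightarrow> 'v) \<Rightarrow> 'k set \<Rightarrow> 'v set \<Rightarrow> 'v set \<Rightarrow> nat" where
  "weight sc Fq W X = fq_dim sc Fq (X \<inter> W)"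

definition scattered :: "('k::field \<Rightarrow> 'v::ab_group_add \<Rightarrow> 'v) \<Rightarrow> 'k set \<Rightarrow> 'v set \<Rightarrow> bool" where
  "scattered sc Fq W \<longleftrightarrow> (\<forall>P\<in>linear_set sc W. weight sc Fq W P = 1)"

(* projective subspace of (projective) dimension d-1 of Lambda = PG(V): a 'k-subspace of
   vector dimension d *)
definition proj_sub :: "('k::field \<Rightarrow> 'v::ab_group_add \<Rightarrow> 'v) \<Rightarrow> nat \<Rightarrow> 'v set \<Rightarrow> bool" where
  "proj_sub sc d X \<longleftrightarrow> module.subspace sc X \<and> vector_space.dim sc X = d"

definition disjoint_from_ls :: "('k::field \<Rightarrow> 'v::ab_group_add \<Rightarrow> 'v) \<Rightarrow> 'v set \<Rightarrow> 'v set \<Rightarrow> bool" where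
  "disjoint_from_ls sc W X \<longleftrightarrow> (\<forall>P\<in>linear_set sc W. \<not> P \<subseteq> X)"

definition transversals :: "('k::field \<Rightarrow> 'v::ab_group_add \<Rightarrow> 'v) \<Rightarrow> nat \<Rightarrow> 'v set \<Rightarrow> 'v set set \<Rightarrow> 'v set set" where
  "transversals sc n W S = {T. proj_sub sc n T \<and> disjoint_from_ls sc W T \<and> (\<forall>s\<in>S. T \<inter> s \<noteq> {0})}"

definition pseudoregulus_type_with ::
  "('k::field \<Rightarrow> 'v::ab_group_add \<Rightarrow> 'v) \<Rightarrow> 'k set \<Rightarrow> nat \<Rightarrow> nat \<Rightarrow> 'v set \<Rightarrow> 'v set set \<Rightarrow> 'v set set \<Rightarrow> bool" where
  "pseudoregulus_type_with sc Fq t n W S Ts \<longleftrightarrow>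
     fq_subspace sc Fq W \<and> scattered sc Fq W \<and> fq_dim sc Fq W = t * n \<and>
     card S = (card Fq ^ (n * t) - 1) div (card Fq ^ t - 1) \<and>
     (\<forall>s\<in>S. proj_sub sc 2 s \<and> weight sc Fq W s = t) \<and>
     (\<forall>s\<in>S. \<forall>s'\<in>S. s \<noteq> s' \<longrightarrow> s \<inter> s' = {0}) \<and>
     transversals sc n W S = Ts \<and> card Ts = 2"

definition pseudoregulus_type ::
  "('k::field \<Rightarrow> 'v::ab_group_add \<Rightarrow> 'v) \<Rightarrow> 'k set \<Rightarrow> nat \<Rightarrow> nat \<Rightarrow> 'v set \<Rightarrow> bool" where
  "pseudoregulus_type sc Fq t n W \<longleftrightarrow> (\<exists>S Ts. pseudoregulus_type_with sc Fq t n W S Ts)"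

definition field_aut :: "('k::field \<Rightarrow> 'k) \<Rightarrow> bool" where
  "field_aut \<sigma> \<longleftrightarrow> bij \<sigma> \<and> (\<forall>x y. \<sigma> (x + y) = \<sigma> x + \<sigma> y) \<and> (\<forall>x y. \<sigma> (x * y) = \<sigma> x * \<sigma> y)"

end

theory Submission
  imports Defs "HOL-Library.FuncSet"
begin



locale fqsp = vector_space sc for sc :: "'k::{field,finite} \<Rightarrow> 'v::ab_group_add \<Rightarrow> 'v" +
  fixes Fq :: "'k set"
  assumes Fq0: "0 \<in> Fq" and Fq1: "1 \<in> Fq"
    and Fq_add: "\<And>a b. a \<in> Fq \<Longrightarrow> b \<in> Fq \<Longrightarrow> a + b \<in> Fq"
    and Fq_uminus: "\<And>a. a \<in> Fq \<Longrightarrow> - a \<in> Fq"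
    and Fq_mult: "\<And>a b. a \<in> Fq \<Longrightarrow> b \<in> Fq \<Longrightarrow> a * b \<in> Fq"
    and Fq_inverse: "\<And>a. a \<in> Fq \<Longrightarrow> inverse a \<in> Fq"
begin

lemma Fq_diff: "a \<in> Fq \<Longrightarrow> b \<in> Fq \<Longrightarrow> a - b \<in> Fq"
  using Fq_add Fq_uminus by (metis diff_conv_add_uminus)

lemma Fq_divide: "a \<in> Fq \<Longrightarrow> b \<in> Fq \<Longrightarrow> a / b \<in> Fq"
  using Fq_mult Fq_inverse by (metis divide_inverse)

lemma card_Fq_ge2: "card Fq \<ge> 2"
proof -
  have "{0,1} \<subseteq> Fq" using Fq0 Fq1 by auto
  then have "card {0::'k,1} \<le> card Fq" by (intro card_mono) auto
  then show ?thesis by simp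
qed

lemma fq_indepD: "fq_indep sc Fq B \<Longrightarrow> finite T \<and> T \<subseteq> B \<and> (\<forall>v\<in>T. d v \<in> Fq) \<and> (\<Sum>v\<in>T. sc (d v) v) = 0 \<Longrightarrow> \<forall>v\<in>T. d v = 0"
  unfolding fq_indep_def by blast

lemma card_fq_span:
  assumes fin: "finite B" and ind: "fq_indep sc Fq B"
  shows "card (fq_span sc Fq B) = card Fq ^ card B"
proof -
  define \<Phi> where "\<Phi> c = (\<Sum>v\<in>B. sc (c v) v)" for c
  have bij: "bij_betw \<Phi> (PiE B (\<lambda>_. Fq)) (fq_span sc Fq B)"
  proof (rule bij_betw_imageI)
    show "inj_on \<Phi> (PiE B (\<lambda>_. Fq))"
    proof (rule inj_onI)
      fix c c' assume c: "c \<in> PiE B (\<lambda>_. Fq)" and c': "c' \<in> PiE B (\<lambda>_. Fq)" and eq: "\<Phi> c = \<Phi> c'"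
      have "(\<Sum>v\<in>B. sc (c v - c' v) v) = \<Phi> c - \<Phi> c'"
        unfolding \<Phi>_def by (simp add: scale_left_diff_distrib sum_subtractf)
      also have "\<dots> = 0" using eq by simp
      finally have s0: "(\<Sum>v\<in>B. sc (c v - c' v) v) = 0" .
      have "\<forall>v\<in>B. c v - c' v \<in> Fq" using c c' by (auto intro: Fq_diff simp: PiE_iff)
      then have "finite B \<and> B \<subseteq> B \<and> (\<forall>v\<in>B. (\<lambda>v. c v - c' v) v \<in> Fq) \<and> (\<Sum>v\<in>B. sc ((\<lambda>v. c v - c' v) v) v) = 0"
        using fin s0 by simp
      then have "\<forall>v\<in>B. (\<lambda>v. c v - c' v) v = 0"
        by (rule fq_indepD[OF ind])
      then have "\<forall>v\<in>B. c v - c' v = 0" by blast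
      then show "c = c'" by (intro PiE_ext[OF c c']) auto
    qed
    show "\<Phi> ` PiE B (\<lambda>_. Fq) = fq_span sc Fq B"
    proof
      show "\<Phi> ` PiE B (\<lambda>_. Fq) \<subseteq> fq_span sc Fq B"
      proof
        fix x assume "x \<in> \<Phi> ` PiE B (\<lambda>_. Fq)"
        then obtain c where c: "c \<in> PiE B (\<lambda>_. Fq)" and x: "x = \<Phi> c" by blast
        have "\<forall>v\<in>B. c v \<in> Fq" using c by (simp add: PiE_iff)
        then show "x \<in> fq_span sc Fq B" unfolding fq_span_def x \<Phi>_def using fin by blast
      qed
      show "fq_span sc Fq B \<subseteq> \<Phi> ` PiE B (\<lambda>_. Fq)"
      proof
        fix x assume "x \<in> fq_span sc Fq B"
        then obtain T c where T: "finite T" "T \<subseteq> B" "\<forall>v\<in>T. c v \<in> Fq" and x: "x = (\<Sum>v\<in>T. sc (c v) v)"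
          unfolding fq_span_def by blast
        define c' where "c' v = (if v \<in> T then c v else if v \<in> B then 0 else undefined)" for v
        have "c' \<in> PiE B (\<lambda>_. Fq)" using T Fq0 by (auto simp: c'_def PiE_iff extensional_def)
        moreover have "\<Phi> c' = x"
        proof -
          have "\<Phi> c' = (\<Sum>v\<in>T. sc (c' v) v)"
            unfolding \<Phi>_def using T fin by (intro sum.mono_neutral_right) (auto simp: c'_def)
          also have "\<dots> = x" unfolding x by (intro sum.cong) (auto simp: c'_def)
          finally show ?thesis .
        qed
        ultimately show "x \<in> \<Phi> ` PiE B (\<lambda>_. Fq)" by blast
      qed
    qed
  qed
  have "card (fq_span sc Fq B) = card (PiE B (\<lambda>_. Fq))"
    using bij_betw_same_card[OF bij] by simp
  also have "\<dots> = card Fq ^ card B" using fin by (simp add: card_PiE)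
  finally show ?thesis .
qed

lemma fq_span_sub:
  assumes X: "fq_subspace sc Fq X" and B: "B \<subseteq> X"
  shows "fq_span sc Fq B \<subseteq> X"
proof
  fix x assume "x \<in> fq_span sc Fq B"
  then obtain T c where T: "finite T" "T \<subseteq> B" "\<forall>v\<in>T. c v \<in> Fq" and x: "x = (\<Sum>v\<in>T. sc (c v) v)"
    unfolding fq_span_def by blast
  have "T \<subseteq> B \<longrightarrow> (\<forall>v\<in>T. c v \<in> Fq) \<longrightarrow> (\<Sum>v\<in>T. sc (c v) v) \<in> X"
    using T(1)
  proof (induction T rule: finite_induct)
    case empty then show ?case using X by (simp add: fq_subspace_def)
  next
    case (insert a F) then show ?case using X B by (auto simp: fq_subspace_def)
  qed
  then show "x \<in> X" using T x by blast
qed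

lemma in_fq_span: "v \<in> B \<Longrightarrow> v \<in> fq_span sc Fq B"
  unfolding fq_span_def
  by (rule CollectI, rule exI[of _ "{v}"], rule exI[of _ "\<lambda>_. 1"]) (auto simp: Fq1)

lemma fq_indep_insert:
  assumes ind: "fq_indep sc Fq B" and x: "x \<notin> fq_span sc Fq B"
  shows "fq_indep sc Fq (insert x B)"
  unfolding fq_indep_def
proof (intro allI impI)
  fix T c assume H: "finite T \<and> T \<subseteq> insert x B \<and> (\<forall>v\<in>T. c v \<in> Fq) \<and> (\<Sum>v\<in>T. sc (c v) v) = 0"
  show "\<forall>v\<in>T. c v = 0"
  proof (cases "x \<in> T")
    case False
    then have "T \<subseteq> B" using H by auto
    then show ?thesis using fq_indepD[OF ind, of T c] H by blast
  next
    case True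
    have xB: "x \<notin> B" using x in_fq_span by blast
    have sum: "sc (c x) x + (\<Sum>v\<in>T-{x}. sc (c v) v) = 0"
      using H True sum.remove[of T x "\<lambda>v. sc (c v) v"] by simp
    have cx: "c x = 0"
    proof (rule ccontr)
      assume cx: "c x \<noteq> 0"
      have "sc (c x) x = - (\<Sum>v\<in>T-{x}. sc (c v) v)" using sum by (simp add: eq_neg_iff_add_eq_0)
      then have "sc (inverse (c x)) (sc (c x) x) = sc (inverse (c x)) (- (\<Sum>v\<in>T-{x}. sc (c v) v))" by simp
      then have "x = - (\<Sum>v\<in>T-{x}. sc (inverse (c x) * c v) v)"
        using cx by (simp add: scale_sum_right)
      also have "\<dots> = (\<Sum>v\<in>T-{x}. sc (- inverse (c x) * c v) v)"
        by (simp add: sum_negf)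
      finally have "x = (\<Sum>v\<in>T-{x}. sc (- inverse (c x) * c v) v)" .
      moreover have "\<forall>v\<in>T-{x}. - inverse (c x) * c v \<in> Fq"
        using H True by (auto intro!: Fq_mult Fq_uminus Fq_inverse)
      ultimately have "x \<in> fq_span sc Fq B"
        unfolding fq_span_def using H
        by (intro CollectI exI[of _ "T-{x}"] exI[of _ "\<lambda>v. - inverse (c x) * c v"]) blast
      then show False using x by blast
    qed
    have "(\<Sum>v\<in>T-{x}. sc (c v) v) = 0" using sum cx by simp
    moreover have "T - {x} \<subseteq> B" using H by auto
    ultimately have "\<forall>v\<in>T-{x}. c v = 0" using fq_indepD[OF ind, of "T-{x}" c] H by blast
    then show ?thesis using cx by auto
  qed
qed

lemma fq_basis_exists:
  assumes fin: "finite X" and X: "fq_subspace sc Fq X"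
  shows "\<exists>B. finite B \<and> B \<subseteq> X \<and> fq_indep sc Fq B \<and> fq_span sc Fq B = X"
proof -
  define F where "F = {B. B \<subseteq> X \<and> fq_indep sc Fq B}"
  have finF: "finite F" using fin unfolding F_def by (simp add: finite_subset[of _ "Pow X"] subset_eq)
  have "{} \<in> F" unfolding F_def fq_indep_def by auto
  define m where "m = Max (card ` F)"
  have "m \<in> card ` F" unfolding m_def using finF \<open>{} \<in> F\<close> by (intro Max_in) auto
  then obtain B where B: "B \<in> F" and Bm: "card B = m" by blast
  have maxB: "\<forall>B'\<in>F. card B' \<le> card B" using finF Bm unfolding m_def by (auto intro: Max_ge)
  have BX: "B \<subseteq> X" and indB: "fq_indep sc Fq B" using B by (auto simp: F_def)
  have finB: "finite B" using BX fin finite_subset by blast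
  have "fq_span sc Fq B = X"
  proof
    show "fq_span sc Fq B \<subseteq> X" using fq_span_sub[OF X BX] .
    show "X \<subseteq> fq_span sc Fq B"
    proof
      fix x assume xX: "x \<in> X"
      show "x \<in> fq_span sc Fq B"
      proof (rule ccontr)
        assume nx: "x \<notin> fq_span sc Fq B"
        then have "insert x B \<in> F" using fq_indep_insert[OF indB nx] xX BX by (auto simp: F_def)
        moreover have "x \<notin> B" using nx in_fq_span by blast
        ultimately show False using maxB finB by fastforce
      qed
    qed
  qed
  then show ?thesis using finB BX indB by blast
qed

lemma fq_dim_eq:
  assumes fin: "finite X" and X: "fq_subspace sc Fq X" and card: "card X = card Fq ^ k"
  shows "fq_dim sc Fq X = k"
proof -
  let ?P = "\<lambda>B. finite B \<and> B \<subseteq> X \<and> fq_indep sc Fq B \<and> fq_span sc Fq B = X"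
  have ex: "\<exists>B. ?P B" using fq_basis_exists[OF fin X] .
  then have P: "?P (SOME B. ?P B)" by (rule someI_ex)
  then have "card X = card Fq ^ card (SOME B. ?P B)" using card_fq_span[of "SOME B. ?P B"] by simp
  then have "card Fq ^ card (SOME B. ?P B) = card Fq ^ k" using card by simp
  moreover have "1 < card Fq" using card_Fq_ge2 by simp
  ultimately have "card (SOME B. ?P B) = k" using power_inject_exp by blast
  then show ?thesis unfolding fq_dim_def using ex by simp
qed

end




locale setting = vector_space sc for sc :: "'k::{field,finite} \<Rightarrow> 'v::ab_group_add \<Rightarrow> 'v" +
  fixes \<sigma> :: "'k \<Rightarrow> 'k" and Fq :: "'k set"
    and n t :: nat and U1 U2 :: "'v set" and f :: "'v \<Rightarrow> 'v" and \<rho> :: 'k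
  assumes n2: "n \<ge> 2" and t2: "t \<ge> 2"
    and aut: "field_aut \<sigma>"
    and Fq_def: "Fq = {x. \<sigma> x = x}"
    and card_K: "card (UNIV :: 'k set) = card Fq ^ t"
    and dimV: "dim (UNIV :: 'v set) = 2 * n"
    and U1: "subspace U1" and U2: "subspace U2"
    and dimU1: "dim U1 = n" and dimU2: "dim U2 = n"
    and dsum_int: "U1 \<inter> U2 = {0}"
    and dsum_sum: "\<forall>v. \<exists>u1\<in>U1. \<exists>u2\<in>U2. v = u1 + u2"
    and f_bij: "bij_betw f U1 U2"
    and f_add: "\<forall>u\<in>U1. \<forall>v\<in>U1. f (u + v) = f u + f v"
    and f_semi: "\<forall>c. \<forall>u\<in>U1. f (sc c u) = sc (\<sigma> c) (f u)"
    and \<rho>: "\<rho> \<noteq> 0"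
begin

lemma s_add: "\<sigma> (x + y) = \<sigma> x + \<sigma> y" using aut by (simp add: field_aut_def)
lemma s_mult: "\<sigma> (x * y) = \<sigma> x * \<sigma> y" using aut by (simp add: field_aut_def)
lemma s_inj: "\<sigma> x = \<sigma> y \<Longrightarrow> x = y" using aut by (auto simp: field_aut_def bij_def inj_def)
lemma s_surj: "\<exists>y. \<sigma> y = x" using aut unfolding field_aut_def bij_def surj_def by metis
lemma s0: "\<sigma> 0 = 0"
proof -
  have "\<sigma> (0 + 0) = \<sigma> 0 + \<sigma> 0" by (rule s_add)
  then show ?thesis by (metis add_cancel_right_right add_0)
qed
lemma s_minus: "\<sigma> (- x) = - \<sigma> x"
proof -
  have "\<sigma> (x + - x) = \<sigma> x + \<sigma> (- x)" by (rule s_add)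
  then show ?thesis using s0 by (metis neg_eq_iff_add_eq_0 add_0_right ab_left_minus)
qed
lemma s1: "\<sigma> 1 = 1"
proof -
  have e: "\<sigma> 1 = \<sigma> 1 * \<sigma> 1" using s_mult[of 1 1] by simp
  have "\<sigma> 1 \<noteq> 0"
  proof
    assume "\<sigma> 1 = 0"
    then have "\<sigma> 1 = \<sigma> 0" using s0 by simp
    then show False using s_inj by fastforce
  qed
  then show ?thesis using e by (metis mult_cancel_left1)
qed
lemma s_inverse: "\<sigma> (inverse x) = inverse (\<sigma> x)"
proof (cases "x = 0")
  case True then show ?thesis using s0 by simp
next
  case False
  have "\<sigma> x * \<sigma> (inverse x) = 1" using s_mult[of x "inverse x"] False s1 by simp
  then show ?thesis by (metis inverse_unique)
qed
lemma s_nz: "x \<noteq> 0 \<Longrightarrow> \<sigma> x \<noteq> 0" using s0 s_inj by metis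

sublocale fqsp sc Fq
  by unfold_locales (auto simp: Fq_def s0 s1 s_add s_minus s_mult s_inverse)

lemma exists_nonfixed: "\<exists>l. \<sigma> l \<noteq> l"
proof (rule ccontr)
  assume "\<not> ?thesis"
  then have "Fq = UNIV" unfolding Fq_def by auto
  then have "card Fq = card Fq ^ t" using card_K by simp
  moreover have "card Fq ^ 2 \<le> card Fq ^ t" using t2 card_Fq_ge2 by (intro power_increasing) auto
  moreover have "card Fq < card Fq ^ 2" using card_Fq_ge2 by (simp add: power2_eq_square)
  ultimately show False by simp
qed

lemma f_in: "u \<in> U1 \<Longrightarrow> f u \<in> U2" using f_bij by (auto simp: bij_betw_def)
lemma f_inj: "u \<in> U1 \<Longrightarrow> v \<in> U1 \<Longrightarrow> f u = f v \<Longrightarrow> u = v"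
  using f_bij by (auto simp: bij_betw_def inj_on_def)
lemma f_onto: "y \<in> U2 \<Longrightarrow> \<exists>u\<in>U1. y = f u" using f_bij by (auto simp: bij_betw_def)
lemma f_add': "u \<in> U1 \<Longrightarrow> v \<in> U1 \<Longrightarrow> f (u + v) = f u + f v" using f_add by blast
lemma f_sc: "u \<in> U1 \<Longrightarrow> f (sc c u) = sc (\<sigma> c) (f u)" using f_semi by blast
lemma f0: "f 0 = 0"
proof -
  have "f (0 + 0) = f 0 + f 0" using f_add' U1 subspace_0 by blast
  then show ?thesis by simp
qed
lemma f_nz: "u \<in> U1 \<Longrightarrow> u \<noteq> 0 \<Longrightarrow> f u \<noteq> 0"
  using f_inj[of u 0] f0 U1 subspace_0 by auto

lemma dsum_unique:
  assumes "a \<in> U1" "b \<in> U1" "c \<in> U2" "d \<in> U2" "a + c = b + d"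
  shows "a = b \<and> c = d"
proof -
  have "a - b = d - c" using assms(5) by (simp add: algebra_simps)
  moreover have "a - b \<in> U1" using assms U1 subspace_diff by blast
  moreover have "d - c \<in> U2" using assms U2 subspace_diff by blast
  ultimately have "a - b \<in> U1 \<inter> U2" by simp
  then have "a - b = 0" using dsum_int by blast
  then have "a - b = 0" "d - c = 0" using \<open>a - b = d - c\<close> by auto
  then show ?thesis by simp
qed

lemma dsum_zero:
  assumes "a \<in> U1" "c \<in> U2" "a + c = 0"
  shows "a = 0 \<and> c = 0"
  using dsum_unique[OF assms(1) _ assms(2) _] assms(3) U1 U2 subspace_0 by fastforce

lemma indep1:
  assumes u: "u \<in> U1" "u \<noteq> 0" and v: "v \<in> U1" "v \<notin> range (\<lambda>a. sc a u)"
    and e: "sc p u + sc r v = 0"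
  shows "p = 0 \<and> r = 0"
proof -
  have r: "r = 0"
  proof (rule ccontr)
    assume r: "r \<noteq> 0"
    have "sc r v = - sc p u" using e by (metis add.commute eq_neg_iff_add_eq_0)
    then have "sc (inverse r) (sc r v) = sc (inverse r) (- sc p u)" by simp
    then have "v = sc (- (inverse r * p)) u" using r by (simp add: scale_minus_right)
    then show False using v by blast
  qed
  then have "p = 0" using e u by simp
  then show ?thesis using r by simp
qed

lemma indep2:
  assumes u: "u \<in> U1" "u \<noteq> 0" and v: "v \<in> U1" "v \<notin> range (\<lambda>a. sc a u)"
    and e: "sc p (f u) + sc r (f v) = 0"
  shows "p = 0 \<and> r = 0"
proof -
  have r: "r = 0"
  proof (rule ccontr)
    assume r: "r \<noteq> 0"
    have "sc r (f v) = - sc p (f u)" using e by (metis add.commute eq_neg_iff_add_eq_0)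
    then have "sc (inverse r) (sc r (f v)) = sc (inverse r) (- sc p (f u))" by simp
    then have fv: "f v = sc (- (inverse r * p)) (f u)" using r by (simp add: scale_minus_right)
    obtain m where m: "\<sigma> m = - (inverse r * p)" using s_surj by blast
    have "f v = f (sc m u)" using fv m f_sc[OF u(1)] by simp
    then have "v = sc m u" using f_inj v(1) u(1) U1 subspace_scale by blast
    then show False using v by blast
  qed
  then have "p = 0" using e u f_nz by simp
  then show ?thesis using r by simp
qed

lemma exists_indep:
  assumes u: "u \<in> U1"
  shows "\<exists>v\<in>U1. v \<notin> range (\<lambda>a. sc a u)"
proof (rule ccontr)
  assume "\<not> ?thesis"
  then have "U1 \<subseteq> span {u}" by (auto simp: span_singleton)
  then have "dim U1 \<le> card {u}" by (intro dim_le_card) auto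
  then show False using dimU1 n2 by simp
qed

end




context setting
begin

definition Bas where "Bas = (SOME B. independent B \<and> span B = UNIV \<and> finite B)"

lemma Bas: "independent Bas \<and> span Bas = UNIV \<and> finite Bas"
proof -
  obtain B where B: "independent B" "UNIV \<subseteq> span B" "card B = dim (UNIV::'v set)"
    using basis_exists by blast
  have "card B > 0" using B(3) dimV n2 by simp
  then have "finite B" using card_ge_0_finite by blast
  then have "\<exists>B. independent B \<and> span B = UNIV \<and> finite B" using B by blast
  then show ?thesis unfolding Bas_def by (rule someI_ex)
qed

end

sublocale setting \<subseteq> fd: finite_dimensional_vector_space sc Bas
  using Bas by unfold_locales auto

context setting
begin

definition phi where "phi u = u + sc \<rho> (f u)"
definition Wset where "Wset = {u + sc \<rho> (f u) | u. u \<in> U1}"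

lemma span_pair: "span {a, b} = {sc x a + sc y b | x y. True}"
proof -
  have "span {a, b} = {z. \<exists>k. z - sc k a \<in> span {b}}" by (rule span_insert)
  also have "\<dots> = {sc x a + sc y b | x y. True}"
  proof (intro set_eqI iffI)
    fix z assume "z \<in> {z. \<exists>k. z - sc k a \<in> span {b}}"
    then obtain k y where "z - sc k a = sc y b" by (auto simp: span_singleton)
    then have "z = sc k a + sc y b" by (simp add: algebra_simps)
    then show "z \<in> {sc x a + sc y b | x y. True}" by blast
  next
    fix z assume "z \<in> {sc x a + sc y b | x y. True}"
    then obtain x y where "z = sc x a + sc y b" by blast
    then have "z - sc x a = sc y b" by simp
    then have "z - sc x a \<in> span {b}" unfolding span_singleton by blast
    then show "z \<in> {z. \<exists>k. z - sc k a \<in> span {b}}" by blast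
  qed
  finally show ?thesis .
qed

lemma mem_line: "x \<in> span {u, f u} \<longleftrightarrow> (\<exists>a b. x = sc a u + sc b (f u))"
  by (simp add: span_pair)

lemma Wset_phi: "Wset = phi ` U1" unfolding Wset_def phi_def by auto

lemma mem_W: "x \<in> Wset \<longleftrightarrow> (\<exists>u\<in>U1. x = phi u)" unfolding Wset_phi by auto

lemma phi0: "phi 0 = 0" unfolding phi_def using f0 by simp

lemma phi_add: "u \<in> U1 \<Longrightarrow> v \<in> U1 \<Longrightarrow> phi u + phi v = phi (u + v)"
  unfolding phi_def using f_add' by (simp add: scale_right_distrib algebra_simps)

lemma phi_sc: "u \<in> U1 \<Longrightarrow> phi (sc c u) = sc c u + sc (\<rho> * \<sigma> c) (f u)"
  unfolding phi_def using f_sc by simp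

lemma phi_scFq: "u \<in> U1 \<Longrightarrow> c \<in> Fq \<Longrightarrow> sc c (phi u) = phi (sc c u)"
proof -
  assume u: "u \<in> U1" and c: "c \<in> Fq"
  then have "\<sigma> c = c" using Fq_def by simp
  then show ?thesis using phi_sc[OF u, of c] unfolding phi_def by (simp add: scale_right_distrib mult.commute)
qed

lemma phi_inj: "u \<in> U1 \<Longrightarrow> v \<in> U1 \<Longrightarrow> phi u = phi v \<Longrightarrow> u = v"
  unfolding phi_def using dsum_unique f_in U2 subspace_scale by blast

lemma phi_zero: "u \<in> U1 \<Longrightarrow> phi u = 0 \<Longrightarrow> u = 0"
  using phi_inj[of u 0] phi0 U1 subspace_0 by auto

lemma W_fq_subspace: "fq_subspace sc Fq Wset"
  unfolding fq_subspace_def Wset_phi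
proof (intro conjI ballI)
  show "0 \<in> phi ` U1" using phi0 U1 subspace_0 by (metis image_eqI)
next
  fix x y assume "x \<in> phi ` U1" "y \<in> phi ` U1"
  then obtain u v where "u \<in> U1" "v \<in> U1" "x = phi u" "y = phi v" by blast
  then show "x + y \<in> phi ` U1" using phi_add U1 subspace_add by (metis image_eqI)
next
  fix c x assume c: "c \<in> Fq" and "x \<in> phi ` U1"
  then obtain u where "u \<in> U1" "x = phi u" by blast
  then show "sc c x \<in> phi ` U1" using phi_scFq c U1 subspace_scale by (metis image_eqI)
qed

lemma finite_card_sub:
  assumes S: "subspace S"
  shows "finite S \<and> card S = card (UNIV::'k set) ^ dim S"
proof -
  interpret K: fqsp sc "UNIV::'k set" by unfold_locales auto
  obtain E where E: "E \<subseteq> S" "independent E" "S \<subseteq> span E" "card E = dim S"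
    using basis_exists by blast
  have finE: "finite E" using fd.finiteI_independent E(2) .
  have spE: "span E = S" using E S span_minimal[of E S] by auto
  have fs: "fq_span sc UNIV E = span E" by (auto simp: fq_span_def span_explicit)
  have fi: "fq_indep sc UNIV E" using E(2) unfolding fq_indep_def dependent_explicit by blast
  have "card S = card (UNIV::'k set) ^ card E" using K.card_fq_span[OF finE fi] fs spE by simp
  moreover have "finite S"
  proof (rule ccontr)
    assume "infinite S"
    then have "card S = 0" by simp
    moreover have "card (UNIV::'k set) ^ card E > 0" by (simp add: card_gt_0_iff)
    ultimately show False using \<open>card S = card (UNIV::'k set) ^ card E\<close> by simp
  qed
  ultimately show ?thesis using E(4) by simp
qed

end




context setting
begin

lemma U1_fin: "finite U1" and U1_card: "card U1 = card (UNIV::'k set) ^ n"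
  using finite_card_sub[OF U1] dimU1 by auto

lemma W_fin: "finite Wset" unfolding Wset_phi using U1_fin by simp

lemma W_card: "card Wset = card Fq ^ (t * n)"
proof -
  have "inj_on phi U1" using phi_inj by (auto simp: inj_on_def)
  then have "card Wset = card U1" unfolding Wset_phi by (rule card_image)
  then show ?thesis using U1_card card_K by (simp add: power_mult)
qed

lemma W_dim: "fq_dim sc Fq Wset = t * n"
  using fq_dim_eq[OF W_fin W_fq_subspace W_card] .

lemma fq_subspace_Int: "fq_subspace sc Fq A \<Longrightarrow> fq_subspace sc Fq B \<Longrightarrow> fq_subspace sc Fq (A \<inter> B)"
  unfolding fq_subspace_def by blast

lemma subspace_fq: "subspace S \<Longrightarrow> fq_subspace sc Fq S"
  unfolding fq_subspace_def using subspace_0 subspace_add subspace_scale by blast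

lemma pt_subspace: "subspace (pt sc w)"
  unfolding pt_def span_singleton[symmetric] by simp

lemma pt_W:
  assumes w: "w \<in> Wset" "w \<noteq> 0"
  shows "pt sc w \<inter> Wset = (\<lambda>c. sc c w) ` Fq"
proof
  show "(\<lambda>c. sc c w) ` Fq \<subseteq> pt sc w \<inter> Wset"
    using W_fq_subspace w unfolding pt_def fq_subspace_def by auto
  show "pt sc w \<inter> Wset \<subseteq> (\<lambda>c. sc c w) ` Fq"
  proof
    fix x assume x: "x \<in> pt sc w \<inter> Wset"
    then obtain c where xc: "x = sc c w" unfolding pt_def by blast
    obtain u where u: "u \<in> U1" "w = phi u" using w mem_W by blast
    have u0: "u \<noteq> 0" using u w phi0 by auto
    obtain u' where u': "u' \<in> U1" "x = phi u'" using x mem_W by blast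
    have "sc c u + sc (c * \<rho>) (f u) = u' + sc \<rho> (f u')"
      using xc u u' unfolding phi_def by (simp add: scale_right_distrib)
    then have "sc c u = u' \<and> sc (c * \<rho>) (f u) = sc \<rho> (f u')"
      using dsum_unique u'(1) u(1) U1 U2 subspace_scale f_in by blast
    then have "sc (c * \<rho>) (f u) = sc (\<rho> * \<sigma> c) (f u)"
      using f_sc[OF u(1), of c] by simp
    then have "c * \<rho> = \<rho> * \<sigma> c" using f_nz[OF u(1) u0] by simp
    then have "\<sigma> c = c" using \<rho> by (simp add: mult.commute)
    then have "c \<in> Fq" using Fq_def by simp
    then show "x \<in> (\<lambda>c. sc c w) ` Fq" using xc by blast
  qed
qed

lemma scattered_W: "scattered sc Fq Wset"
  unfolding scattered_def
proof
  fix P assume "P \<in> linear_set sc Wset"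
  then obtain w where w: "w \<in> Wset" "w \<noteq> 0" and P: "P = pt sc w" unfolding linear_set_def by blast
  have eq: "P \<inter> Wset = (\<lambda>c. sc c w) ` Fq" using pt_W[OF w] P by simp
  have "inj_on (\<lambda>c. sc c w) Fq" using w(2) by (auto simp: inj_on_def)
  then have "card (P \<inter> Wset) = card Fq ^ 1" using eq card_image by simp
  moreover have "finite (P \<inter> Wset)" using eq by simp
  moreover have "fq_subspace sc Fq (P \<inter> Wset)"
    using fq_subspace_Int[OF subspace_fq[OF pt_subspace] W_fq_subspace] P by simp
  ultimately show "weight sc Fq Wset P = 1" unfolding weight_def using fq_dim_eq
    by (simp add: inf_commute)
qed

end




context setting
begin

lemma line_W:
  assumes u: "u \<in> U1" "u \<noteq> 0"
  shows "span {u, f u} \<inter> Wset = range (\<lambda>a. phi (sc a u))"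
proof
  show "range (\<lambda>a. phi (sc a u)) \<subseteq> span {u, f u} \<inter> Wset"
  proof
    fix x assume "x \<in> range (\<lambda>a. phi (sc a u))"
    then obtain a where x: "x = phi (sc a u)" by blast
    have "x = sc a u + sc (\<rho> * \<sigma> a) (f u)" using x phi_sc[OF u(1)] by simp
    then have "x \<in> span {u, f u}" unfolding mem_line by blast
    moreover have "x \<in> Wset" using x mem_W U1 subspace_scale u(1) by blast
    ultimately show "x \<in> span {u, f u} \<inter> Wset" by blast
  qed
  show "span {u, f u} \<inter> Wset \<subseteq> range (\<lambda>a. phi (sc a u))"
  proof
    fix x assume x: "x \<in> span {u, f u} \<inter> Wset"
    then obtain a b where xab: "x = sc a u + sc b (f u)" using mem_line by blast
    obtain w where w: "w \<in> U1" "x = phi w" using x mem_W by blast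
    have "sc a u + sc b (f u) = w + sc \<rho> (f w)" using xab w unfolding phi_def by simp
    then have "sc a u = w" using dsum_unique w(1) u(1) U1 U2 subspace_scale f_in by blast
    then show "x \<in> range (\<lambda>a. phi (sc a u))" using w by blast
  qed
qed

lemma line_weight:
  assumes u: "u \<in> U1" "u \<noteq> 0"
  shows "weight sc Fq Wset (span {u, f u}) = t"
proof -
  have eq: "span {u, f u} \<inter> Wset = range (\<lambda>a. phi (sc a u))" using line_W[OF u] .
  have "inj (\<lambda>a. phi (sc a u))"
  proof (rule injI)
    fix a b assume "phi (sc a u) = phi (sc b u)"
    then have "sc a u = sc b u" using phi_inj U1 subspace_scale u(1) by blast
    then show "a = b" using u(2) by simp
  qed
  then have "card (span {u, f u} \<inter> Wset) = card Fq ^ t" using eq card_image card_K by metis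
  moreover have "finite (span {u, f u} \<inter> Wset)" using eq by simp
  moreover have "fq_subspace sc Fq (span {u, f u} \<inter> Wset)"
    using fq_subspace_Int[OF subspace_fq[OF subspace_span] W_fq_subspace] by simp
  ultimately show ?thesis unfolding weight_def using fq_dim_eq by (simp add: inf_commute)
qed

lemma line_dim:
  assumes u: "u \<in> U1" "u \<noteq> 0"
  shows "dim (span {u, f u}) = 2"
proof -
  have fu: "f u \<noteq> 0" using f_nz u by simp
  have ne: "u \<noteq> f u"
  proof
    assume "u = f u"
    then have "u \<in> U1 \<inter> U2" using u(1) f_in[OF u(1)] by simp
    then show False using dsum_int u(2) by auto
  qed
  have "u \<notin> span {f u}"
  proof
    assume "u \<in> span {f u}"
    then obtain a where "u = sc a (f u)" by (auto simp: span_singleton)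
    then have "u \<in> U2" using subspace_scale[OF U2 f_in[OF u(1)], of a] by simp
    then show False using u dsum_int by blast
  qed
  moreover have "independent {f u}" using fu by simp
  ultimately have "independent (insert u {f u})" by (rule independent_insertI)
  then have "dim (span {u, f u}) = card {u, f u}" using dim_span_eq_card_independent by simp
  then show ?thesis using ne by simp
qed

lemma line_eq_iff:
  assumes u: "u \<in> U1" "u \<noteq> 0" and v: "v \<in> U1" "v \<noteq> 0"
  shows "span {u, f u} = span {v, f v} \<longleftrightarrow> v \<in> range (\<lambda>a. sc a u)"
proof
  assume eq: "span {u, f u} = span {v, f v}"
  have "v \<in> span {v, f v}" by (simp add: span_base)
  then obtain a b where "v = sc a u + sc b (f u)" using eq mem_line by blast
  then have "v + 0 = sc a u + sc b (f u)" by simp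
  moreover have "sc a u \<in> U1" using subspace_scale[OF U1 u(1)] by simp
  moreover have "sc b (f u) \<in> U2" using subspace_scale[OF U2 f_in[OF u(1)]] by simp
  moreover have "(0::'v) \<in> U2" using subspace_0[OF U2] .
  ultimately have "v = sc a u" using dsum_unique[of v "sc a u" 0 "sc b (f u)"] v(1) by simp
  then show "v \<in> range (\<lambda>a. sc a u)" by blast
next
  assume "v \<in> range (\<lambda>a. sc a u)"
  then obtain c where c: "v = sc c u" by blast
  then have c0: "c \<noteq> 0" using v by auto
  have fv: "f v = sc (\<sigma> c) (f u)" using c f_sc u by simp
  have sc0: "\<sigma> c \<noteq> 0" using s_nz c0 by simp
  show "span {u, f u} = span {v, f v}"
    unfolding span_pair
  proof (intro set_eqI iffI)
    fix z assume "z \<in> {sc x u + sc y (f u) | x y. True}"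
    then obtain x y where z: "z = sc x u + sc y (f u)" by blast
    have "z = sc (x / c) v + sc (y / \<sigma> c) (f v)" using z c fv c0 sc0 by simp
    then show "z \<in> {sc x v + sc y (f v) | x y. True}" by blast
  next
    fix z assume "z \<in> {sc x v + sc y (f v) | x y. True}"
    then obtain x y where z: "z = sc x v + sc y (f v)" by blast
    have "z = sc (x * c) u + sc (y * \<sigma> c) (f u)" using z c fv by simp
    then show "z \<in> {sc x u + sc y (f u) | x y. True}" by blast
  qed
qed

lemma line_disj:
  assumes u: "u \<in> U1" "u \<noteq> 0" and v: "v \<in> U1" "v \<notin> range (\<lambda>a. sc a u)"
  shows "span {u, f u} \<inter> span {v, f v} = {0}"
proof -
  have "x = 0" if x: "x \<in> span {u, f u}" "x \<in> span {v, f v}" for x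
  proof -
    obtain a b where ab: "x = sc a u + sc b (f u)" using x(1) mem_line by blast
    obtain c d where cd: "x = sc c v + sc d (f v)" using x(2) mem_line by blast
    have "sc a u = sc c v \<and> sc b (f u) = sc d (f v)"
      using dsum_unique[of "sc a u" "sc c v" "sc b (f u)" "sc d (f v)"] ab cd u v U1 U2 subspace_scale f_in
      by simp
    then have e1: "sc a u + sc (- c) v = 0" and e2: "sc b (f u) + sc (- d) (f v) = 0"
      by (simp_all add: scale_minus_left)
    have "a = 0" using indep1[OF u v e1] by simp
    moreover have "b = 0" using indep2[OF u v e2] by simp
    ultimately show ?thesis using ab by simp
  qed
  then show ?thesis by (auto simp: span_zero)
qed

end




context setting
begin

lemma card_S: "card {span {u, f u} | u. u \<in> U1 \<and> u \<noteq> 0} = (card Fq ^ (n * t) - 1) div (card Fq ^ t - 1)"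
proof -
  define L where "L u = span {u, f u}" for u
  define S where "S = {span {u, f u} | u. u \<in> U1 \<and> u \<noteq> 0}"
  have SL: "S = L ` (U1 - {0})" unfolding S_def L_def by auto
  define A where "A s = {u \<in> U1 - {0}. L u = s}" for s
  define Q where "Q = card (UNIV::'k set)"
  have "card Fq \<le> card Fq ^ t" by (rule self_le_power) (use t2 card_Fq_ge2 in auto)
  then have Q2: "Q \<ge> 2" unfolding Q_def card_K using card_Fq_ge2 by simp
  have finS: "finite S" using SL U1_fin by simp
  have UA: "\<Union> (A ` S) = U1 - {0}" unfolding A_def SL by auto
  have cardA: "card (A s) = Q - 1" if s: "s \<in> S" for s
  proof -
    obtain u0 where u0: "u0 \<in> U1" "u0 \<noteq> 0" and s: "s = L u0" using s SL by blast
    have "A s = (\<lambda>a. sc a u0) ` (UNIV - {0})"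
    proof
      show "A s \<subseteq> (\<lambda>a. sc a u0) ` (UNIV - {0})"
      proof
        fix v assume "v \<in> A s"
        then have v: "v \<in> U1" "v \<noteq> 0" "L v = L u0" unfolding A_def s by auto
        then have "v \<in> range (\<lambda>a. sc a u0)" using line_eq_iff[OF u0 v(1) v(2)] unfolding L_def by simp
        then obtain a where "v = sc a u0" by blast
        moreover have "a \<noteq> 0" using v(2) calculation by auto
        ultimately show "v \<in> (\<lambda>a. sc a u0) ` (UNIV - {0})" by blast
      qed
      show "(\<lambda>a. sc a u0) ` (UNIV - {0}) \<subseteq> A s"
      proof
        fix v assume "v \<in> (\<lambda>a. sc a u0) ` (UNIV - {0})"
        then obtain a where a: "a \<noteq> 0" "v = sc a u0" by blast
        have v1: "v \<in> U1" using a subspace_scale[OF U1 u0(1)] by simp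
        have v0: "v \<noteq> 0" using a u0 by simp
        have "L u0 = L v" using line_eq_iff[OF u0 v1 v0] a unfolding L_def by blast
        then show "v \<in> A s" unfolding A_def s using v1 v0 by simp
      qed
    qed
    moreover have "inj_on (\<lambda>a. sc a u0) (UNIV - {0})" using u0 by (auto simp: inj_on_def)
    ultimately have "card (A s) = card (UNIV - {0::'k})" by (simp add: card_image)
    also have "\<dots> = Q - 1" unfolding Q_def by (simp add: card_Diff_singleton)
    finally show ?thesis .
  qed
  have "card (U1 - {0}) = (\<Sum>s\<in>S. card (A s))"
    unfolding UA[symmetric]
    by (rule card_UN_disjoint) (use finS U1_fin in \<open>auto simp: A_def\<close>)
  also have "\<dots> = card S * (Q - 1)" using cardA by simp
  finally have e: "card S * (Q - 1) = Q ^ n - 1"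
    using U1_card U1_fin subspace_0[OF U1] unfolding Q_def by (simp add: card_Diff_singleton)
  have "card Fq ^ (n * t) = Q ^ n" unfolding Q_def card_K by (metis power_mult mult.commute)
  moreover have "card Fq ^ t = Q" unfolding Q_def card_K ..
  moreover have "(card S * (Q - 1)) div (Q - 1) = card S" using Q2 by simp
  ultimately have "card S = (card Fq ^ (n * t) - 1) div (card Fq ^ t - 1)" using e by metis
  then show ?thesis unfolding S_def .
qed

end




context setting
begin

lemma trans_unique:
  assumes T: "subspace T" "dim T = n"
    and meet: "\<And>u. u \<in> U1 \<Longrightarrow> u \<noteq> 0 \<Longrightarrow> T \<inter> span {u, f u} \<noteq> {0}"
  shows "T = U1 \<or> T = U2"
proof -
  have lineel: "\<exists>a b. sc a u + sc b (f u) \<in> T \<and> (a \<noteq> 0 \<or> b \<noteq> 0)" if u: "u \<in> U1" "u \<noteq> 0" for u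
  proof -
    have "0 \<in> T \<inter> span {u, f u}" using subspace_0[OF T(1)] span_zero by simp
    then obtain y where y: "y \<in> T" "y \<in> span {u, f u}" "y \<noteq> 0" using meet[OF u] by blast
    then obtain a b where ab: "y = sc a u + sc b (f u)" using mem_line by blast
    have "a \<noteq> 0 \<or> b \<noteq> 0" using ab y(3) by auto
    then show ?thesis using ab y(1) by blast
  qed
  define P where "P = {u\<in>U1. \<exists>z\<in>U2. u + z \<in> T}"
  define Q where "Q = {u\<in>U1. f u \<in> T}"
  have cover: "u \<in> P \<or> u \<in> Q" if u: "u \<in> U1" for u
  proof (cases "u = 0")
    case True
    then have "u + 0 \<in> T" using subspace_0[OF T(1)] by simp
    then show ?thesis using u subspace_0[OF U2] unfolding P_def by blast
  next
    case False
    obtain a b where ab: "sc a u + sc b (f u) \<in> T" "a \<noteq> 0 \<or> b \<noteq> 0" using lineel[OF u False] by blast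
    show ?thesis
    proof (cases "a = 0")
      case True
      then have "sc b (f u) \<in> T" "b \<noteq> 0" using ab by auto
      then have "sc (inverse b) (sc b (f u)) \<in> T" using subspace_scale[OF T(1)] by blast
      then have "f u \<in> T" using \<open>b \<noteq> 0\<close> by simp
      then show ?thesis using u unfolding Q_def by blast
    next
      case False
      have "sc (inverse a) (sc a u + sc b (f u)) \<in> T" using subspace_scale[OF T(1) ab(1)] by blast
      then have "u + sc (inverse a * b) (f u) \<in> T" using False by (simp add: scale_right_distrib)
      moreover have "sc (inverse a * b) (f u) \<in> U2" using subspace_scale[OF U2 f_in[OF u]] by blast
      ultimately show ?thesis using u unfolding P_def by blast
    qed
  qed
  have PorQ: "U1 \<subseteq> P \<or> U1 \<subseteq> Q"
  proof (rule ccontr)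
    assume "\<not> ?thesis"
    then obtain p q where p: "p \<in> U1" "p \<notin> P" and q: "q \<in> U1" "q \<notin> Q" by blast
    have pQ: "f p \<in> T" using cover[OF p(1)] p(2) unfolding Q_def by blast
    obtain z where z: "z \<in> U2" "q + z \<in> T" using cover[OF q(1)] q(2) unfolding P_def by blast
    have pq: "p + q \<in> U1" using subspace_add[OF U1 p(1) q(1)] .
    show False
    proof (cases "p + q \<in> P")
      case True
      then obtain z' where z': "z' \<in> U2" "p + q + z' \<in> T" unfolding P_def by blast
      have "(p + q + z') - (q + z) \<in> T" using subspace_diff[OF T(1) z'(2) z(2)] .
      moreover have "(p + q + z') - (q + z) = p + (z' - z)" by (simp add: algebra_simps)
      moreover have "z' - z \<in> U2" using subspace_diff[OF U2 z'(1) z(1)] .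
      ultimately have "p \<in> P" using p(1) unfolding P_def by auto
      then show False using p(2) by simp
    next
      case False
      then have "f (p + q) \<in> T" using cover[OF pq] unfolding Q_def by blast
      then have "f p + f q \<in> T" using f_add'[OF p(1) q(1)] by simp
      then have "(f p + f q) - f p \<in> T" using subspace_diff[OF T(1) _ pQ] by blast
      then have "f q \<in> T" by simp
      then show False using q unfolding Q_def by blast
    qed
  qed
  show ?thesis
  proof (cases "U1 \<subseteq> Q")
    case True
    have "U2 \<subseteq> T"
    proof
      fix y assume "y \<in> U2"
      then obtain u where "u \<in> U1" "y = f u" using f_onto by blast
      then show "y \<in> T" using True unfolding Q_def by blast
    qed
    then have "U2 = T" using fd.subspace_dim_equal[OF U2 T(1)] dimU2 T(2) by simp
    then show ?thesis by simp
  next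
    case False
    then have UP: "U1 \<subseteq> P" using PorQ by blast
    have sumU: "{x + y | x y. x \<in> T \<and> y \<in> U2} = UNIV"
    proof (intro set_eqI iffI)
      fix v :: 'v
      obtain u1 u2 where u: "u1 \<in> U1" "u2 \<in> U2" "v = u1 + u2" using dsum_sum by blast
      obtain z where z: "z \<in> U2" "u1 + z \<in> T" using UP u(1) unfolding P_def by blast
      have "v = (u1 + z) + (u2 - z)" using u(3) by (simp add: algebra_simps)
      moreover have "u2 - z \<in> U2" using subspace_diff[OF U2 u(2) z(1)] .
      ultimately show "v \<in> {x + y | x y. x \<in> T \<and> y \<in> U2}" using z(2) by blast
    qed simp
    have "dim {x + y | x y. x \<in> T \<and> y \<in> U2} + dim (T \<inter> U2) = dim T + dim U2"
      by (rule fd.dim_sums_Int[OF T(1) U2])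
    then have "dim (T \<inter> U2) = 0" using sumU dimV T(2) dimU2 by simp
    then have TU2a: "T \<inter> U2 \<subseteq> {0}" using fd.dim_eq_0[of "T \<inter> U2"] by simp
    have TU2: "x = 0" if "x \<in> T" "x \<in> U2" for x using TU2a that by blast
    have G: "\<exists>c. w + sc c (f w) \<in> T" if w: "w \<in> U1" "w \<noteq> 0" for w
    proof -
      obtain a b where ab: "sc a w + sc b (f w) \<in> T" "a \<noteq> 0 \<or> b \<noteq> 0" using lineel[OF w] by blast
      have a0: "a \<noteq> 0"
      proof
        assume "a = 0"
        then have "sc b (f w) \<in> T" "b \<noteq> 0" using ab by auto
        moreover have "sc b (f w) \<in> U2" using subspace_scale[OF U2 f_in[OF w(1)]] by blast
        ultimately have "sc b (f w) = 0" using TU2 by blast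
        then show False using \<open>b \<noteq> 0\<close> f_nz[OF w] by simp
      qed
      have "sc (inverse a) (sc a w + sc b (f w)) \<in> T" using subspace_scale[OF T(1) ab(1)] by blast
      then have "w + sc (inverse a * b) (f w) \<in> T" using a0 by (simp add: scale_right_distrib)
      then show ?thesis by blast
    qed
    have "U1 \<subseteq> T"
    proof
      fix u assume u1: "u \<in> U1"
      show "u \<in> T"
      proof (cases "u = 0")
        case True then show ?thesis using subspace_0[OF T(1)] by simp
      next
        case False
        note u = u1 False
        obtain v where v: "v \<in> U1" "v \<notin> range (\<lambda>a. sc a u)" using exists_indep[OF u1] by blast
        obtain l where l: "\<sigma> l \<noteq> l" using exists_nonfixed by blast
        have l0: "l \<noteq> 0" using l s0 by auto
        have sl0: "\<sigma> l \<noteq> 0" using s_nz[OF l0] .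
        have v0: "v \<noteq> 0" using v(2) by (metis rangeI scale_zero_left)
        have uv: "u + v \<in> U1" using subspace_add[OF U1 u1 v(1)] .
        have uv0: "u + v \<noteq> 0"
        proof
          assume "u + v = 0"
          then have "v = sc (-1) u" by (simp add: scale_minus_left eq_neg_iff_add_eq_0 add.commute)
          then show False using v(2) by blast
        qed
        have lu: "sc l u \<in> U1" using subspace_scale[OF U1 u1] by blast
        have lu0: "sc l u \<noteq> 0" using l0 u(2) by simp
        have luv: "sc l u + v \<in> U1" using subspace_add[OF U1 lu v(1)] .
        have luv0: "sc l u + v \<noteq> 0"
        proof
          assume "sc l u + v = 0"
          then have "v = sc (- l) u" by (simp add: scale_minus_left eq_neg_iff_add_eq_0 add.commute)
          then show False using v(2) by blast
        qed
        obtain c1 where x1: "u + sc c1 (f u) \<in> T" using G[OF u] by blast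
        obtain c2 where x2: "v + sc c2 (f v) \<in> T" using G[OF v(1) v0] by blast
        obtain c3 where x3: "(u + v) + sc c3 (f (u + v)) \<in> T" using G[OF uv uv0] by blast
        obtain c4 where x4: "sc l u + sc c4 (f (sc l u)) \<in> T" using G[OF lu lu0] by blast
        obtain c5 where x5: "(sc l u + v) + sc c5 (f (sc l u + v)) \<in> T" using G[OF luv luv0] by blast
        have fuv: "f (u + v) = f u + f v" using f_add'[OF u1 v(1)] .
        have flu: "f (sc l u) = sc (\<sigma> l) (f u)" using f_sc[OF u1] .
        have fluv: "f (sc l u + v) = sc (\<sigma> l) (f u) + f v" using f_add'[OF lu v(1)] flu by simp
        have fuU2: "f u \<in> U2" "f v \<in> U2" using f_in u1 v(1) by auto
        have zero: "sc p (f u) + sc r (f v) = 0" if "sc p (f u) + sc r (f v) \<in> T" for p r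
        proof -
          have "sc p (f u) + sc r (f v) \<in> U2"
            using subspace_add[OF U2 subspace_scale[OF U2 fuU2(1)] subspace_scale[OF U2 fuU2(2)]] by blast
          then show ?thesis using TU2 that by blast
        qed
        have "(u + sc c1 (f u)) + (v + sc c2 (f v)) - ((u + v) + sc c3 (f (u + v))) \<in> T"
          using subspace_diff[OF T(1) subspace_add[OF T(1) x1 x2] x3] .
        moreover have "(u + sc c1 (f u)) + (v + sc c2 (f v)) - ((u + v) + sc c3 (f (u + v)))
              = sc (c1 - c3) (f u) + sc (c2 - c3) (f v)"
          unfolding fuv by (simp add: algebra_simps scale_left_diff_distrib scale_right_distrib)
        ultimately have "sc (c1 - c3) (f u) + sc (c2 - c3) (f v) = 0" using zero by simp
        then have "c1 - c3 = 0 \<and> c2 - c3 = 0" by (rule indep2[OF u v])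
        then have e1: "c1 = c3" "c2 = c3" by auto
        have "(sc l u + sc c4 (f (sc l u))) + (v + sc c2 (f v)) - ((sc l u + v) + sc c5 (f (sc l u + v))) \<in> T"
          using subspace_diff[OF T(1) subspace_add[OF T(1) x4 x2] x5] .
        moreover have "(sc l u + sc c4 (f (sc l u))) + (v + sc c2 (f v)) - ((sc l u + v) + sc c5 (f (sc l u + v)))
              = sc (c4 * \<sigma> l - c5 * \<sigma> l) (f u) + sc (c2 - c5) (f v)"
          unfolding fluv flu by (simp add: algebra_simps scale_left_diff_distrib scale_right_distrib)
        ultimately have "sc (c4 * \<sigma> l - c5 * \<sigma> l) (f u) + sc (c2 - c5) (f v) = 0" using zero by simp
        then have "c4 * \<sigma> l - c5 * \<sigma> l = 0 \<and> c2 - c5 = 0" by (rule indep2[OF u v])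
        then have "c4 * \<sigma> l - c5 * \<sigma> l = 0" "c2 - c5 = 0" by auto
        then have e2: "c4 = c5" "c2 = c5" using sl0 by auto
        have "sc l (u + sc c1 (f u)) - (sc l u + sc c4 (f (sc l u))) \<in> T"
          using subspace_diff[OF T(1) subspace_scale[OF T(1) x1] x4] .
        moreover have "sc l (u + sc c1 (f u)) - (sc l u + sc c4 (f (sc l u)))
              = sc (l * c1 - c4 * \<sigma> l) (f u) + sc 0 (f v)"
          unfolding flu by (simp add: algebra_simps scale_left_diff_distrib scale_right_distrib)
        ultimately have "sc (l * c1 - c4 * \<sigma> l) (f u) + sc 0 (f v) = 0" using zero[of "l * c1 - c4 * \<sigma> l" 0] by metis
        then have "l * c1 - c4 * \<sigma> l = 0 \<and> (0::'k) = 0" by (rule indep2[OF u v])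
        then have "l * c1 - c4 * \<sigma> l = 0" by simp
        then have "c1 * (l - \<sigma> l) = 0" using e1 e2 by (simp add: algebra_simps)
        then have "c1 = 0" using l by simp
        then show "u \<in> T" using x1 by simp
      qed
    qed
    then have "U1 = T" using fd.subspace_dim_equal[OF U1 T(1)] dimU1 T(2) by simp
    then show ?thesis by simp
  qed
qed

end




context setting
begin

lemma U1_not_U2: "U1 \<noteq> U2"
proof
  assume "U1 = U2"
  then have "U1 \<subseteq> {0}" using dsum_int by blast
  then have "dim U1 = 0" using fd.dim_eq_0 by blast
  then show False using dimU1 n2 by simp
qed

lemma U1_disj: "disjoint_from_ls sc Wset U1"
  unfolding disjoint_from_ls_def
proof
  fix P assume "P \<in> linear_set sc Wset"
  then obtain w where w: "w \<in> Wset" "w \<noteq> 0" and P: "P = pt sc w" unfolding linear_set_def by blast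
  obtain u where u: "u \<in> U1" "w = phi u" using w(1) mem_W by blast
  have wP: "w \<in> P" unfolding P pt_def by (metis rangeI scale_one)
  show "\<not> P \<subseteq> U1"
  proof
    assume "P \<subseteq> U1"
    then have "w \<in> U1" using wP by blast
    then have "w - u \<in> U1" using subspace_diff[OF U1 _ u(1)] by blast
    then have "sc \<rho> (f u) \<in> U1" using u(2) unfolding phi_def by simp
    moreover have "sc \<rho> (f u) \<in> U2" using subspace_scale[OF U2 f_in[OF u(1)]] by blast
    ultimately have "sc \<rho> (f u) = 0" using dsum_int by blast
    then have "f u = 0" using \<rho> by simp
    then have "u = 0" using f_nz[OF u(1)] by blast
    then show False using w(2) u(2) phi0 by simp
  qed
qed

lemma U2_disj: "disjoint_from_ls sc Wset U2"
  unfolding disjoint_from_ls_def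
proof
  fix P assume "P \<in> linear_set sc Wset"
  then obtain w where w: "w \<in> Wset" "w \<noteq> 0" and P: "P = pt sc w" unfolding linear_set_def by blast
  obtain u where u: "u \<in> U1" "w = phi u" using w(1) mem_W by blast
  have wP: "w \<in> P" unfolding P pt_def by (metis rangeI scale_one)
  show "\<not> P \<subseteq> U2"
  proof
    assume "P \<subseteq> U2"
    then have "w \<in> U2" using wP by blast
    moreover have "sc \<rho> (f u) \<in> U2" using subspace_scale[OF U2 f_in[OF u(1)]] by blast
    ultimately have "w - sc \<rho> (f u) \<in> U2" using subspace_diff[OF U2] by blast
    then have "u \<in> U2" using u(2) unfolding phi_def by simp
    then have "u = 0" using u(1) dsum_int by blast
    then show False using w(2) u(2) phi0 by simp
  qed
qed

lemma main:
  "pseudoregulus_type_with sc Fq t n Wset {span {u, f u} | u. u \<in> U1 \<and> u \<noteq> 0} {U1, U2}"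
proof -
  define S where "S = {span {u, f u} | u. u \<in> U1 \<and> u \<noteq> 0}"
  have lines: "\<forall>s\<in>S. proj_sub sc 2 s \<and> weight sc Fq Wset s = t"
  proof
    fix s assume "s \<in> S"
    then obtain u where u: "u \<in> U1" "u \<noteq> 0" and s: "s = span {u, f u}" unfolding S_def by blast
    show "proj_sub sc 2 s \<and> weight sc Fq Wset s = t"
      unfolding proj_sub_def s using line_dim[OF u] line_weight[OF u] by simp
  qed
  have pairw: "\<forall>s\<in>S. \<forall>s'\<in>S. s \<noteq> s' \<longrightarrow> s \<inter> s' = {0}"
  proof (intro ballI impI)
    fix s s' assume "s \<in> S" "s' \<in> S" and ne: "s \<noteq> s'"
    then obtain u v where u: "u \<in> U1" "u \<noteq> 0" and s: "s = span {u, f u}"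
      and v: "v \<in> U1" "v \<noteq> 0" and s': "s' = span {v, f v}" unfolding S_def by blast
    have "v \<notin> range (\<lambda>a. sc a u)" using line_eq_iff[OF u v] ne s s' by blast
    then show "s \<inter> s' = {0}" using line_disj[OF u v(1)] s s' by simp
  qed
  have trans: "transversals sc n Wset S = {U1, U2}"
  proof
    show "transversals sc n Wset S \<subseteq> {U1, U2}"
    proof
      fix T assume "T \<in> transversals sc n Wset S"
      then have T: "subspace T" "dim T = n" and m: "\<forall>s\<in>S. T \<inter> s \<noteq> {0}"
        unfolding transversals_def proj_sub_def by auto
      have "T \<inter> span {u, f u} \<noteq> {0}" if "u \<in> U1" "u \<noteq> 0" for u
        using m that unfolding S_def by blast
      then show "T \<in> {U1, U2}" using trans_unique[OF T] by blast
    qed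
    show "{U1, U2} \<subseteq> transversals sc n Wset S"
    proof -
      have m1: "U1 \<inter> s \<noteq> {0}" if sS: "s \<in> S" for s
      proof -
        obtain u where u: "u \<in> U1" "u \<noteq> 0" and s: "s = span {u, f u}" using sS unfolding S_def by blast
        have "u \<in> U1 \<inter> s" using u s span_base[of u "{u, f u}"] by simp
        then show ?thesis using u(2) by blast
      qed
      have m2: "U2 \<inter> s \<noteq> {0}" if sS: "s \<in> S" for s
      proof -
        obtain u where u: "u \<in> U1" "u \<noteq> 0" and s: "s = span {u, f u}" using sS unfolding S_def by blast
        have "f u \<in> U2 \<inter> s" using f_in[OF u(1)] s span_base[of "f u" "{u, f u}"] by simp
        then show ?thesis using f_nz[OF u] by blast
      qed
      show ?thesis unfolding transversals_def proj_sub_def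
        using U1 U2 dimU1 dimU2 U1_disj U2_disj m1 m2 by blast
    qed
  qed
  have c2: "card {U1, U2} = 2" using U1_not_U2 by simp
  have cardS: "card S = (card Fq ^ (n * t) - 1) div (card Fq ^ t - 1)" using card_S unfolding S_def .
  show ?thesis
    unfolding pseudoregulus_type_with_def S_def[symmetric]
    by (intro conjI W_fq_subspace scattered_W W_dim cardS lines pairw trans c2)
qed

end


theorem theorem3p5:
  fixes sc :: "'k::{field,finite} \<Rightarrow> 'v::ab_group_add \<Rightarrow> 'v"
    and \<sigma> :: "'k \<Rightarrow> 'k" and Fq :: "'k set"
    and n t :: nat and U1 U2 :: "'v set" and f :: "'v \<Rightarrow> 'v" and \<rho> :: 'k
  assumes vs: "vector_space sc"
    and n2: "n \<ge> 2" and t2: "t \<ge> 2"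
    and aut: "field_aut \<sigma>"
    and Fq_def: "Fq = {x. \<sigma> x = x}"
    and card_K: "card (UNIV :: 'k set) = card Fq ^ t"
    and dimV: "vector_space.dim sc (UNIV :: 'v set) = 2 * n"
    and U1: "module.subspace sc U1" and U2: "module.subspace sc U2"
    and dimU1: "vector_space.dim sc U1 = n" and dimU2: "vector_space.dim sc U2 = n"
    and dsum_int: "U1 \<inter> U2 = {0}"
    and dsum_sum: "\<forall>v. \<exists>u1\<in>U1. \<exists>u2\<in>U2. v = u1 + u2"
    and f_bij: "bij_betw f U1 U2"
    and f_add: "\<forall>u\<in>U1. \<forall>v\<in>U1. f (u + v) = f u + f v"
    and f_semi: "\<forall>c. \<forall>u\<in>U1. f (sc c u) = sc (\<sigma> c) (f u)"
    and \<rho>: "\<rho> \<noteq> 0"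
  shows "pseudoregulus_type_with sc Fq t n {u + sc \<rho> (f u) | u. u \<in> U1}
           {module.span sc {u, f u} | u. u \<in> U1 \<and> u \<noteq> 0} {U1, U2}"
proof -
  have "setting sc \<sigma> Fq n t U1 U2 f \<rho>"
    unfolding setting_def setting_axioms_def
    using vs n2 t2 aut Fq_def card_K dimV U1 U2 dimU1 dimU2 dsum_int dsum_sum f_bij f_add f_semi \<rho>
    by blast
  then interpret S: setting sc \<sigma> Fq n t U1 U2 f \<rho> .
  show ?thesis using S.main unfolding S.Wset_def .
qed

end
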